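(* Suppose the following holds: for every polynomial $f(t)=1+\sum_{i=1}^{d}f_{i-1}t^i$ with positive integer coefficients and only real roots, with recursive decomposition $f(t)=g(t)+t\,h(t)$, $g(t)=1+\sum_{i=1}^{d}g_it^i$, $h(t)=1+\sum_{i=1}^{d-1}h_it^i$, one has $h_i\le g_i$ for all $1\le i\le d-1$. Then every polynomial $1+\sum_{i=1}^{d}f_{i-1}t^i$ with positive integer coefficients and only real roots is the $f$-polynomial of a simplicial complex.
   Context: For positive integers $m,i$, the $i$-th binomial expansion of $m$ is the unique representation $m=\binom{a_i}{i}+\binom{a_{i-1}}{i-1}+\cdots+\binom{a_j}{j}$ with $a_i>\cdots>a_j\ge j\ge1$. Recursive decomposition: for $f(t)=1+\sum_{i=1}^d f_{i-1}t^i$ with positive integer coefficients and, for each $1\le i\le d$, the $i$-th binomial expansion $f_{i-1}=\binom{a_i}{i}+\cdots+\binom{a_j}{j}$, set $g_i=\binom{a_i-1}{i}+\binom{a_{i-1}-1}{i-1}+\cdots+\binom{a_j-1}{j}$ and $h_{i-1}=\binom{a_i-1}{i-1}+\binom{a_{i-1}-1}{i-2}+\cdots+\binom{a_j-1}{j-1}$ (so $h_0=1$ and $f_{i-1}=g_i+h_{i-1}$); then $f(t)=g(t)+t\,h(t)$ with $g(t)=1+\sum_{i=1}^d g_it^i$, $h(t)=1+\sum_{i=1}^{d-1}h_it^i$. The $f$-polynomial of a $(d-1)$-dimensional simplicial complex $\Delta$ is $\sum_{i=0}^{d}f_{i-1}t^i$, where $f_i$ is the number of faces of cardinality $i+1$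 and $f_{-1}=1$. *)

theory Defs
  imports Complex_Main "HOL-Computational_Algebra.Polynomial"
begin

text \<open>The i-th binomial expansion of m is encoded by the list L = [a_i, a_(i-1), ..., a_j]
  (so L!k = a_(i-k)), of length i - j + 1 with 1 \<le> j \<le> i.\<close>
definition binexp_rep :: "nat \<Rightarrow> nat \<Rightarrow> nat list \<Rightarrow> bool" where
  "binexp_rep i m L \<longleftrightarrow>
     1 \<le> length L \<and> length L \<le> i \<and>
     (\<forall>k. Suc k < length L \<longrightarrow> L ! k > L ! Suc k) \<and>
     (\<forall>k < length L. L ! k \<ge> i - k) \<and>
     m = (\<Sum>k<length L. (L ! k) choose (i - k))"

definition binexp :: "nat \<Rightarrow> nat \<Rightarrow> nat list" where
  "binexp i m = (THE L. binexp_rep i m L)"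

text \<open>g_i computed from the i-th binomial expansion of f_(i-1) = m.\<close>
definition g_coef :: "nat \<Rightarrow> nat \<Rightarrow> nat" where
  "g_coef i m = (let L = binexp i m in \<Sum>k<length L. (L ! k - 1) choose (i - k))"

text \<open>h_(i-1) computed from the i-th binomial expansion of f_(i-1) = m.\<close>
definition h_coef :: "nat \<Rightarrow> nat \<Rightarrow> nat" where
  "h_coef i m = (let L = binexp i m in \<Sum>k<length L. (L ! k - 1) choose (i - k - 1))"

definition pos_real_rooted :: "nat poly \<Rightarrow> bool" where
  "pos_real_rooted f \<longleftrightarrow> coeff f 0 = 1 \<and> (\<forall>i\<in>{1..degree f}. coeff f i > 0) \<and>
     (\<forall>z::complex. poly (map_poly of_nat f) z = 0 \<longrightarrow> z \<in> \<real>)"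

definition simplicial_complex :: "'v set set \<Rightarrow> bool" where
  "simplicial_complex \<Delta> \<longleftrightarrow> finite \<Delta> \<and> {} \<in> \<Delta> \<and> (\<forall>F\<in>\<Delta>. finite F) \<and>
     (\<forall>F\<in>\<Delta>. \<forall>G. G \<subseteq> F \<longrightarrow> G \<in> \<Delta>)"

definition is_f_polynomial :: "nat poly \<Rightarrow> 'v set set \<Rightarrow> bool" where
  "is_f_polynomial f \<Delta> \<longleftrightarrow> (\<forall>i. card {F\<in>\<Delta>. card F = i} = coeff f i)"

end

theory Submission
  imports Defs "HOL-Library.Nat_Bijection"
begin

fun Seg :: "nat \<Rightarrow> nat list \<Rightarrow> nat set set" where
  "Seg k [] = {}"
| "Seg 0 (a#L) = {{}}"
| "Seg (Suc k) (a#L) = {Y. Y \<subseteq> {..<a} \<and> card Y = Suc k} \<union> insert a ` Seg k L"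

lemma Seg_le_hd:
  assumes "sorted_wrt (>) L" "X \<in> Seg k L" shows "\<forall>x\<in>X. x \<le> hd L"
  using assms
proof (induction k L arbitrary: X rule: Seg.induct)
  case (3 k a L)
  show ?case
  proof (cases "X \<in> insert a ` Seg k L")
    case True
    then obtain Z where Z: "Z \<in> Seg k L" "X = insert a Z" by auto
    have "\<forall>x\<in>Z. x \<le> hd L" using 3 Z by auto
    moreover have "L \<noteq> []" using Z by auto
    ultimately show ?thesis using 3(2) Z by (cases L) auto
  next
    case False thus ?thesis using 3 by auto
  qed
qed auto

lemma Seg_lt:
  assumes "sorted_wrt (>) (a#L)" "X \<in> Seg k L" shows "X \<subseteq> {..<a}"
proof -
  have "L \<noteq> []" using assms by auto
  then have "hd L < a" using assms by (cases L) auto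
  thus ?thesis using Seg_le_hd[of L X k] assms by fastforce
qed

lemma Seg_card:
  assumes "sorted_wrt (>) L" "X \<in> Seg k L" shows "finite X \<and> card X = k"
  using assms
proof (induction k L arbitrary: X rule: Seg.induct)
  case (3 k a L)
  show ?case
  proof (cases "X \<in> insert a ` Seg k L")
    case True
    then obtain Z where Z: "Z \<in> Seg k L" "X = insert a Z" by auto
    have "Z \<subseteq> {..<a}" using Seg_lt 3 Z by blast
    then have "a \<notin> Z" by auto
    then show ?thesis using 3 Z by auto
  next
    case False thus ?thesis using 3 by (auto intro: finite_subset)
  qed
qed auto

lemma Seg_finite: "finite (Seg k L)"
proof (induction k L rule: Seg.induct)
  case (3 k a L)
  have "finite {Y. Y \<subseteq> {..<a} \<and> card Y = Suc k}" by (rule finite_subset[of _ "Pow {..<a}"]) auto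
  thus ?case using 3 by simp
qed auto

lemma Seg_card_sum:
  assumes "sorted_wrt (>) L" "length L \<le> Suc k"
  shows "card (Seg k L) = (\<Sum>t<length L. (L!t) choose (k - t))"
  using assms
proof (induction k L rule: Seg.induct)
  case (2 a L)
  thus ?case by simp
next
  case (3 k a L)
  have d: "{Y. Y \<subseteq> {..<a} \<and> card Y = Suc k} \<inter> insert a ` Seg k L = {}" by auto
  have inj: "inj_on (insert a) (Seg k L)"
    using Seg_lt[of a L] 3(2) unfolding inj_on_def by (metis insert_ident lessThan_iff subset_eq less_irrefl)
  have "card (Seg (Suc k) (a#L)) = card {Y. Y \<subseteq> {..<a} \<and> card Y = Suc k} + card (insert a ` Seg k L)"
    by (simp only: Seg.simps, rule card_Un_disjoint) (auto intro: Seg_finite finite_subset[of _ "Pow {..<a}"])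
  also have "\<dots> = (a choose Suc k) + card (Seg k L)"
    using n_subsets[of "{..<a}" "Suc k"] card_image[OF inj] by simp
  also have "card (Seg k L) = (\<Sum>t<length L. (L!t) choose (k - t))" using 3 by simp
  finally show ?case by (simp add: sum.lessThan_Suc_shift del: sum.lessThan_Suc)
qed auto

lemma enc_ge: "finite X \<Longrightarrow> x \<in> X \<Longrightarrow> 2^x \<le> set_encode X"
  unfolding set_encode_def by (rule member_le_sum) auto

lemma enc_lt: "X \<subseteq> {..<a} \<Longrightarrow> set_encode X < 2^a"
proof (induction a arbitrary: X)
  case 0 thus ?case by simp
next
  case (Suc a)
  have f: "finite X" using Suc.prems finite_subset by blast
  show ?case
  proof (cases "a \<in> X")
    case True
    have "X - {a} \<subseteq> {..<a}" using Suc.prems by auto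
    then have "set_encode (X - {a}) < 2^a" by (rule Suc.IH)
    moreover have "set_encode X = 2^a + set_encode (X - {a})"
    proof -
      have "X = insert a (X - {a})" using True by auto
      then have "set_encode X = set_encode (insert a (X - {a}))" by simp
      also have "\<dots> = 2^a + set_encode (X - {a})" using f set_encode_insert[of "X - {a}" a] by simp
      finally show ?thesis .
    qed
    ultimately show ?thesis by simp
  next
    case False
    then have "X \<subseteq> {..<a}" using Suc.prems by (auto simp: subset_eq less_Suc_eq)
    then show ?thesis using Suc.IH[of X] by simp
  qed
qed

lemma Seg_IS:
  assumes "sorted_wrt (>) L" "Y \<in> Seg k L" "finite X" "card X = k" "set_encode X < set_encode Y"
  shows "X \<in> Seg k L"
  using assms
proof (induction k L arbitrary: X Y rule: Seg.induct)
  case (2 a L)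
  thus ?case by auto
next
  case (3 k a L)
  have small: "X \<subseteq> {..<a}" if "set_encode Y < 2^a" 
  proof
    fix x assume "x \<in> X"
    then have "2^x \<le> set_encode X" using enc_ge 3 by blast
    then have "2^x < (2::nat)^a" using 3(6) that by linarith
    then show "x \<in> {..<a}" by simp
  qed
  show ?case
  proof (cases "Y \<in> insert a ` Seg k L")
    case False
    then have "Y \<subseteq> {..<a}" using 3 by auto
    then show ?thesis using small enc_lt 3 by auto
  next
    case True
    then obtain Z where Z: "Z \<in> Seg k L" "Y = insert a Z" by auto
    have Za: "Z \<subseteq> {..<a}" using Seg_lt 3 Z by blast
    have fZ: "finite Z" using Za finite_subset by blast
    have "a \<notin> Z" using Za by auto
    then have eY: "set_encode Y = 2^a + set_encode Z" using Z fZ by simp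
    have eZ: "set_encode Z < 2^a" using enc_lt Za by blast
    have Xa: "X \<subseteq> {..<Suc a}"
    proof
      fix x assume "x \<in> X"
      then have "2^x \<le> set_encode X" using enc_ge 3 by blast
      then have "2^x < (2::nat)^Suc a" using 3(6) eY eZ by simp
      then show "x \<in> {..<Suc a}" by (simp del: power_Suc)
    qed
    show ?thesis
    proof (cases "a \<in> X")
      case False
      then have "X \<subseteq> {..<a}" using Xa by (auto simp: subset_eq less_Suc_eq)
      then show ?thesis using 3 by simp
    next
      case True
      define W where "W = X - {a}"
      have XW: "X = insert a W" "a \<notin> W" using True W_def by auto
      have fW: "finite W" "card W = k" using 3(4,5) XW by auto
      have "set_encode X = 2^a + set_encode W" using XW fW by simp
      then have "set_encode W < set_encode Z" using 3(6) eY by simp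
      then have "W \<in> Seg k L" using 3(1)[of Z W] 3(2) Z fW by simp
      then show ?thesis using XW by simp
    qed
  qed
qed auto

lemma IS_compare:
  assumes finA: "finite A" and finB: "finite B"
    and fA: "\<And>X. X \<in> A \<Longrightarrow> finite X \<and> card X = k"
    and fB: "\<And>X. X \<in> B \<Longrightarrow> finite X \<and> card X = k"
    and iA: "\<And>X Y. Y \<in> A \<Longrightarrow> finite X \<Longrightarrow> card X = k \<Longrightarrow> set_encode X < set_encode Y \<Longrightarrow> X \<in> A"
    and iB: "\<And>X Y. Y \<in> B \<Longrightarrow> finite X \<Longrightarrow> card X = k \<Longrightarrow> set_encode X < set_encode Y \<Longrightarrow> X \<in> B"
    and c: "card A \<le> card B"
  shows "A \<subseteq> B"
proof (rule ccontr)
  assume "\<not> A \<subseteq> B"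
  then obtain x where x: "x \<in> A" "x \<notin> B" by auto
  have "B \<subseteq> A"
  proof
    fix y assume y: "y \<in> B"
    have "set_encode y \<noteq> set_encode x" using set_encode_eq fA fB x y by metis
    moreover have "\<not> set_encode x < set_encode y" using iB[OF y] fA x by blast
    ultimately have "set_encode y < set_encode x" by simp
    then show "y \<in> A" using iA[OF x(1)] fB y by blast
  qed
  then have "B \<subset> A" using x by auto
  then have "card B < card A" using finA psubset_card_mono by blast
  then show False using c by simp
qed

lemma Seg_mono_card:
  assumes "sorted_wrt (>) L" "sorted_wrt (>) M" "card (Seg k L) \<le> card (Seg k M)"
  shows "Seg k L \<subseteq> Seg k M"
proof (rule IS_compare[OF Seg_finite Seg_finite _ _ _ _ assms(3)])
  fix X assume "X \<in> Seg k L" thus "finite X \<and> card X = k" using Seg_card assms(1) by blast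
next
  fix X assume "X \<in> Seg k M" thus "finite X \<and> card X = k" using Seg_card assms(2) by blast
next
  fix X Y assume "Y \<in> Seg k L" "finite X" "card X = k" "set_encode X < set_encode Y"
  thus "X \<in> Seg k L" using Seg_IS[OF assms(1)] by blast
next
  fix X Y assume "Y \<in> Seg k M" "finite X" "card X = k" "set_encode X < set_encode Y"
  thus "X \<in> Seg k M" using Seg_IS[OF assms(2)] by blast
qed

lemma shadow1:
  assumes "sorted_wrt (>) L" "X \<in> Seg (Suc k) L" "x \<in> X"
  shows "X - {x} \<in> Seg k L"
  using assms
proof (induction L arbitrary: k X)
  case Nil thus ?case by simp
next
  case (Cons a L)
  show ?case
  proof (cases "X \<in> insert a ` Seg k L")
    case False
    then have X: "X \<subseteq> {..<a}" "card X = Suc k" using Cons by auto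
    have "finite X" using X finite_subset by blast
    then have c: "card (X - {x}) = k" using X Cons.prems by simp
    show ?thesis
    proof (cases k)
      case 0
      then have "X - {x} = {}" using c \<open>finite X\<close> by simp
      then show ?thesis using 0 by simp
    next
      case (Suc j)
      then show ?thesis using X c by auto
    qed
  next
    case True
    then obtain Z where Z: "Z \<in> Seg k L" "X = insert a Z" by auto
    have Za: "Z \<subseteq> {..<a}" using Seg_lt Cons.prems Z by blast
    have cZ: "finite Z" "card Z = k" using Seg_card Cons.prems Z by auto
    show ?thesis
    proof (cases "x = a")
      case True
      then have "X - {x} = Z" using Z Za by auto
      then show ?thesis using Za cZ by (cases k) auto
    next
      case False
      then have xZ: "x \<in> Z" using Z Cons.prems by auto
      then obtain j where j: "k = Suc j" using cZ by (cases k) auto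
      have "Z - {x} \<in> Seg j L" using Cons.IH[where k=j and X=Z] Cons.prems Z j xZ by auto
      moreover have "X - {x} = insert a (Z - {x})" using Z False by auto
      ultimately show ?thesis using j by simp
    qed
  qed
qed

lemma shadow2:
  assumes "sorted_wrt (>) L" "\<forall>t<length L. L!t \<ge> Suc k - t" "X \<in> Seg k L"
  shows "\<exists>y. y \<notin> X \<and> insert y X \<in> Seg (Suc k) L"
  using assms
proof (induction L arbitrary: k X)
  case Nil thus ?case by simp
next
  case (Cons a L)
  have a: "a \<ge> Suc k" using Cons.prems(2)[rule_format, of 0] by simp
  show ?case
  proof (cases k)
    case 0
    then have "X = {}" using Cons.prems by simp
    then show ?thesis using 0 a by (intro exI[of _ 0]) auto
  next
    case (Suc j)
    show ?thesis
    proof (cases "X \<in> insert a ` Seg j L")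
      case False
      then have X: "X \<subseteq> {..<a}" "card X = Suc j" using Cons Suc by auto
      have "card X < card {..<a}" using X a Suc by simp
      then have "\<not> {..<a} \<subseteq> X"
      proof (intro notI)
        assume "{..<a} \<subseteq> X"
        then have "X = {..<a}" using X by auto
        then show False using \<open>card X < card {..<a}\<close> by simp
      qed
      then obtain y where y: "y < a" "y \<notin> X" by auto
      have "finite X" using X finite_subset by blast
      then have "insert y X \<subseteq> {..<a}" "card (insert y X) = Suc k" using X y Suc by auto
      then show ?thesis using y Suc by auto
    next
      case True
      then obtain Z where Z: "Z \<in> Seg j L" "X = insert a Z" by auto
      have h2: "\<forall>t<length L. L!t \<ge> Suc j - t"
      proof (intro allI impI)
        fix t assume "t < length L"
        then have "(a#L)!(Suc t) \<ge> Suc k - Suc t" using Cons.prems(2)[rule_format, of "Suc t"] by simp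
        then show "L!t \<ge> Suc j - t" using Suc by simp
      qed
      obtain y where y: "y \<notin> Z" "insert y Z \<in> Seg (Suc j) L"
        using Cons.IH[where k=j and X=Z] Cons.prems h2 Z by auto
      have "insert y Z \<subseteq> {..<a}" using Seg_lt Cons.prems y by blast
      then have "y \<noteq> a" by auto
      then have "y \<notin> X" "insert y X = insert a (insert y Z)" using y Z by auto
      then show ?thesis using y Suc by auto
    qed
  qed
qed

lemma Seg_card_Cons:
  assumes "sorted_wrt (>) (a#L)"
  shows "card (Seg (Suc k) (a#L)) = (a choose Suc k) + card (Seg k L)"
proof -
  have inj: "inj_on (insert a) (Seg k L)"
    using Seg_lt[OF assms] unfolding inj_on_def by (metis insert_ident lessThan_iff subset_eq less_irrefl)
  have "card (Seg (Suc k) (a#L)) = card {Y. Y \<subseteq> {..<a} \<and> card Y = Suc k} + card (insert a ` Seg k L)"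
    by (simp only: Seg.simps, rule card_Un_disjoint) (auto intro: Seg_finite finite_subset[of _ "Pow {..<a}"])
  also have "\<dots> = (a choose Suc k) + card (Seg k L)"
    using n_subsets[of "{..<a}" "Suc k"] card_image[OF inj] by simp
  finally show ?thesis .
qed

lemma Seg0: "card (Seg 0 L) = (if L = [] then 0 else 1)"
  by (cases L) auto

lemma pascal:
  assumes "sorted_wrt (>) N"
  shows "card (Seg (Suc j) (map Suc N)) = card (Seg (Suc j) N) + card (Seg j N)"
  using assms
proof (induction N arbitrary: j)
  case Nil thus ?case by simp
next
  case (Cons b N)
  have s1: "sorted_wrt (>) (Suc b # map Suc N)" using Cons.prems by (simp add: sorted_wrt_map)
  have s0: "sorted_wrt (>) N" using Cons.prems by simp
  have "card (Seg (Suc j) (map Suc (b#N))) = (Suc b choose Suc j) + card (Seg j (map Suc N))"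
    using Seg_card_Cons[OF s1] by simp
  moreover have "card (Seg (Suc j) (b#N)) = (b choose Suc j) + card (Seg j N)"
    using Seg_card_Cons[OF Cons.prems] .
  moreover have "card (Seg j (map Suc N)) + (b choose j) = card (Seg j N) + card (Seg j (b#N))"
  proof (cases j)
    case 0
    then show ?thesis by (simp add: Seg0)
  next
    case (Suc j')
    then show ?thesis using Cons.IH[OF s0, of j'] Seg_card_Cons[OF Cons.prems, of j'] by simp
  qed
  ultimately show ?case by simp
qed

definition rep0 :: "nat \<Rightarrow> nat \<Rightarrow> nat list \<Rightarrow> bool" where
  "rep0 i m L \<longleftrightarrow> length L \<le> i \<and> sorted_wrt (>) L \<and> (\<forall>k < length L. L ! k \<ge> i - k) \<and>
     m = (\<Sum>k<length L. (L ! k) choose (i - k))"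

lemma binexp_rep_iff: "binexp_rep i m L \<longleftrightarrow> 1 \<le> length L \<and> rep0 i m L"
proof -
  have "transp ((>) :: nat \<Rightarrow> nat \<Rightarrow> bool)" by (auto simp: transp_def)
  then have "sorted_wrt (>) L \<longleftrightarrow> (\<forall>k. Suc k < length L \<longrightarrow> L ! k > L ! Suc k)"
    by (simp add: sorted_wrt_iff_nth_Suc_transp)
  then show ?thesis unfolding binexp_rep_def rep0_def by auto
qed

lemma rep0_Nil: "rep0 i m [] \<longleftrightarrow> m = 0"
  by (auto simp: rep0_def)

lemma rep0_Cons: "rep0 i m (a#L) \<longleftrightarrow>
  1 \<le> i \<and> a \<ge> i \<and> (\<forall>x\<in>set L. x < a) \<and> (a choose i) \<le> m \<and> rep0 (i - 1) (m - (a choose i)) L"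
proof -
  have e: "(\<forall>k<length (a#L). (a#L) ! k \<ge> i - k) \<longleftrightarrow> a \<ge> i \<and> (\<forall>k<length L. L ! k \<ge> (i - 1) - k)"
    unfolding length_Cons All_less_Suc2 by (simp add: diff_diff_left)
  have s: "(\<Sum>k<length (a#L). (a#L) ! k choose (i - k)) = (a choose i) + (\<Sum>k<length L. L ! k choose ((i - 1) - k))"
    by (simp add: sum.lessThan_Suc_shift diff_diff_left del: sum.lessThan_Suc)
  show ?thesis unfolding rep0_def e s by (auto simp: diff_diff_left)
qed

lemma choose_pos: "k \<le> n \<Longrightarrow> 0 < (n::nat) choose k"
  by simp

lemma rep0_bound: "rep0 i m (a#L) \<Longrightarrow> m < (Suc a choose i)"
proof (induction L arbitrary: i m a)
  case Nil
  then have i: "1 \<le> i" "a \<ge> i" "m = a choose i" by (auto simp: rep0_Cons rep0_Nil)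
  then obtain i' where "i = Suc i'" by (cases i) auto
  then show ?case using i by simp
next
  case (Cons b L)
  then have h: "1 \<le> i" "a \<ge> i" "b < a" "(a choose i) \<le> m" "rep0 (i - 1) (m - (a choose i)) (b#L)"
    by (auto simp: rep0_Cons)
  have "m - (a choose i) < (Suc b choose (i - 1))" using Cons.IH[OF h(5)] .
  also have "\<dots> \<le> (a choose (i - 1))" using h(3) binomial_right_mono by simp
  finally have "m < (a choose i) + (a choose (i - 1))" using h(4) by linarith
  moreover obtain i' where "i = Suc i'" using h by (cases i) auto
  ultimately show ?case by simp
qed

lemma rep0_unique: "rep0 i m L1 \<Longrightarrow> rep0 i m L2 \<Longrightarrow> L1 = L2"
proof (induction L1 arbitrary: i m L2)
  case Nil
  show ?case
  proof (cases L2)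
    case (Cons b L)
    then have "b \<ge> i" "(b choose i) \<le> m" using Nil by (auto simp: rep0_Cons)
    moreover have "m = 0" using Nil by (simp add: rep0_Nil)
    ultimately show ?thesis by simp
  qed simp
next
  case (Cons a L1)
  show ?case
  proof (cases "L2 = []")
    case True
    then have "m = 0" using Cons by (simp add: rep0_Nil)
    moreover have "a \<ge> i" "(a choose i) \<le> m" using Cons by (auto simp: rep0_Cons)
    ultimately show ?thesis by simp
  next
    case False
    then obtain b L where Cons2: "L2 = b # L" by (cases L2) auto
    have ab: "a = b"
    proof (rule ccontr)
      assume "a \<noteq> b"
      then consider "a < b" | "b < a" by linarith
      then show False
      proof cases
        case 1
        have "m < (Suc a choose i)" using rep0_bound Cons.prems(1) by blast
        also have "\<dots> \<le> (b choose i)" using 1 binomial_right_mono by simp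
        also have "\<dots> \<le> m" using Cons.prems(2) Cons2 by (simp add: rep0_Cons)
        finally show False by simp
      next
        case 2
        have "m < (Suc b choose i)" using rep0_bound Cons.prems(2) Cons2 by blast
        also have "\<dots> \<le> (a choose i)" using 2 binomial_right_mono by simp
        also have "\<dots> \<le> m" using Cons.prems(1) by (simp add: rep0_Cons)
        finally show False by simp
      qed
    qed
    then have "L1 = L" using Cons.IH[of "i - 1" "m - (a choose i)" L] Cons.prems Cons2 by (simp add: rep0_Cons)
    then show ?thesis using ab Cons2 by simp
  qed
qed

lemma choose_big: "m < (m + Suc n) choose (Suc n)"
proof (induction n)
  case 0 thus ?case by simp
next
  case (Suc n)
  have "(m + Suc (Suc n)) choose Suc (Suc n) = ((m + Suc n) choose Suc n) + ((m + Suc n) choose Suc (Suc n))"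
    by simp
  then show ?case using Suc by linarith
qed

lemma ex_a: "\<exists>a. (a choose Suc n) \<le> m \<and> m < (Suc a choose Suc n)"
proof -
  define P where "P a \<longleftrightarrow> m < (a choose Suc n)" for a
  have ex: "P (m + Suc n)" using choose_big P_def by simp
  define a0 where "a0 = (LEAST a. P a)"
  have Pa0: "P a0" using LeastI[of P, OF ex] a0_def by simp
  have "a0 \<noteq> 0" using Pa0 P_def by (cases a0) auto
  then obtain a where a: "a0 = Suc a" by (cases a0) auto
  have "\<not> P a" using not_less_Least[of a P] a a0_def by simp
  then have "(a choose Suc n) \<le> m \<and> m < (Suc a choose Suc n)" using Pa0 a P_def by simp
  then show ?thesis by blast
qed

lemma rep0_exists: "(i = 0 \<longrightarrow> m = 0) \<Longrightarrow> \<exists>L. rep0 i m L"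
proof (induction i arbitrary: m)
  case 0 thus ?case by (intro exI[of _ "[]"]) (simp add: rep0_Nil)
next
  case (Suc i)
  show ?case
  proof (cases "m = 0")
    case True thus ?thesis by (intro exI[of _ "[]"]) (simp add: rep0_Nil)
  next
    case False
    obtain a where a: "(a choose Suc i) \<le> m" "m < (Suc a choose Suc i)" using ex_a by blast
    have ai: "a \<ge> Suc i"
    proof (rule ccontr)
      assume "\<not> a \<ge> Suc i"
      then have "a \<le> i" by simp
      then have "(Suc a choose Suc i) \<le> 1"
        by (cases "a = i") (auto simp: binomial_eq_0)
      then show False using a False by simp
    qed
    define m' where "m' = m - (a choose Suc i)"
    have m': "m' < (a choose i)" using a m'_def by simp
    have "i = 0 \<longrightarrow> m' = 0" using m' by auto
    then obtain L where L: "rep0 i m' L" using Suc.IH by blast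
    have lt: "\<forall>x\<in>set L. x < a"
    proof (cases L)
      case (Cons b L')
      have b: "(b choose i) \<le> m'" "\<forall>x\<in>set L'. x < b" using L Cons by (auto simp: rep0_Cons)
      have "b < a"
      proof (rule ccontr)
        assume "\<not> b < a"
        then have "(a choose i) \<le> (b choose i)" using binomial_right_mono by simp
        then show False using b m' by simp
      qed
      then show ?thesis using b Cons by auto
    qed simp
    have "rep0 (Suc i) m (a#L)" using L lt ai a m'_def by (simp add: rep0_Cons)
    then show ?thesis by blast
  qed
qed

lemma binexp_facts:
  assumes "1 \<le> i" "1 \<le> m"
  shows "binexp_rep i m (binexp i m)"
proof -
  obtain L where L: "rep0 i m L" using rep0_exists assms by fastforce
  have "L \<noteq> []" using L assms by (auto simp: rep0_Nil)
  then have b: "binexp_rep i m L" using L by (simp add: binexp_rep_iff Suc_le_eq)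
  have "\<exists>!L. binexp_rep i m L"
    using b rep0_unique by (auto simp: binexp_rep_iff)
  then show ?thesis unfolding binexp_def by (rule theI')
qed

lemma binexp_rep_facts:
  assumes "binexp_rep i m L"
  shows "sorted_wrt (>) L" "length L \<le> i" "\<forall>t<length L. L!t \<ge> i - t"
    "m = (\<Sum>k<length L. (L ! k) choose (i - k))" "L \<noteq> []"
  using assms by (auto simp: binexp_rep_iff rep0_def)

lemma shift_facts:
  assumes "sorted_wrt (>) L" "\<forall>x\<in>set L. x \<ge> 1"
  shows "map Suc (map (\<lambda>a. a - 1) L) = L" "sorted_wrt (>) (map (\<lambda>a. a - 1) L)"
proof -
  show "map Suc (map (\<lambda>a. a - 1) L) = L" using assms(2) by (auto intro!: map_idI)
  show "sorted_wrt (>) (map (\<lambda>a. a - 1) L)"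
    unfolding sorted_wrt_map
    by (rule sorted_wrt_mono_rel[OF _ assms(1)]) (use assms(2) in fastforce)
qed

lemma key:
  assumes i: "1 \<le> i" and rL: "binexp_rep (Suc i) m1 L" and rM: "binexp_rep i m0 M"
    and hg: "(\<Sum>k<length L. (L!k - 1) choose (Suc i - k - 1)) \<le> (\<Sum>k<length M. (M!k - 1) choose (i - k))"
  shows "Seg i L \<subseteq> Seg i M"
proof -
  note fL = binexp_rep_facts[OF rL] and fM = binexp_rep_facts[OF rM]
  define L' where "L' = map (\<lambda>a. a - 1) L"
  define M' where "M' = map (\<lambda>a. a - 1) M"
  have posL: "\<forall>x\<in>set L. x \<ge> 1"
  proof
    fix x assume "x \<in> set L"
    then obtain t where "t < length L" "x = L!t" by (auto simp: in_set_conv_nth)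
    then show "x \<ge> 1" using fL(2,3) by fastforce
  qed
  have posM: "\<forall>x\<in>set M. x \<ge> 1"
  proof
    fix x assume "x \<in> set M"
    then obtain t where "t < length M" "x = M!t" by (auto simp: in_set_conv_nth)
    then show "x \<ge> 1" using fM(2,3) by fastforce
  qed
  have LL: "map Suc L' = L" and sL': "sorted_wrt (>) L'" using shift_facts[OF fL(1) posL] L'_def by auto
  have MM: "map Suc M' = M" and sM': "sorted_wrt (>) M'" using shift_facts[OF fM(1) posM] M'_def by auto
  have cL': "card (Seg i L') = (\<Sum>k<length L. (L!k - 1) choose (Suc i - k - 1))"
  proof -
    have "card (Seg i L') = (\<Sum>k<length L'. (L'!k) choose (i - k))"
      using Seg_card_sum[OF sL'] fL(2) L'_def by simp
    also have "\<dots> = (\<Sum>k<length L. (L!k - 1) choose (Suc i - k - 1))"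
      unfolding L'_def by (intro sum.cong) auto
    finally show ?thesis .
  qed
  have cM': "card (Seg i M') = (\<Sum>k<length M. (M!k - 1) choose (i - k))"
  proof -
    have "card (Seg i M') = (\<Sum>k<length M'. (M'!k) choose (i - k))"
      using Seg_card_sum[OF sM'] fM(2) M'_def by simp
    also have "\<dots> = (\<Sum>k<length M. (M!k - 1) choose (i - k))"
      unfolding M'_def by (intro sum.cong) auto
    finally show ?thesis .
  qed
  have top: "Seg i L' \<subseteq> Seg i M'"
    using Seg_mono_card[OF sL' sM'] cL' cM' hg by simp
  obtain j where j: "i = Suc j" using i by (cases i) auto
  have low: "Seg j L' \<subseteq> Seg j M'"
  proof
    fix X assume X: "X \<in> Seg j L'"
    have cond: "\<forall>t<length L'. L'!t \<ge> Suc j - t"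
    proof (intro allI impI)
      fix t assume "t < length L'"
      then have "t < length L" "L!t \<ge> Suc i - t" using fL(3) L'_def by auto
      then show "L'!t \<ge> Suc j - t" using j L'_def by simp
    qed
    obtain y where y: "y \<notin> X" "insert y X \<in> Seg (Suc j) L'" using shadow2[OF sL' cond X] by blast
    then have "insert y X \<in> Seg (Suc j) M'" using top j by blast
    then have "insert y X - {y} \<in> Seg j M'" using shadow1[OF sM'] by blast
    then show "X \<in> Seg j M'" using y by simp
  qed
  have "card (Seg i L) = card (Seg i L') + card (Seg j L')"
    using pascal[OF sL', of j] LL j by simp
  also have "\<dots> \<le> card (Seg i M') + card (Seg j M')"
    using cL' cM' hg low card_mono[OF Seg_finite] by (simp add: add_mono)
  also have "\<dots> = card (Seg i M)"
    using pascal[OF sM', of j] MM j by simp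
  finally show ?thesis using Seg_mono_card fL(1) fM(1) by blast
qed

theorem proposition3p5:
  assumes "\<forall>f. pos_real_rooted f \<longrightarrow>
             (\<forall>i\<in>{1..<degree f}. h_coef (Suc i) (coeff f (Suc i)) \<le> g_coef i (coeff f i))"
  shows "\<forall>f. pos_real_rooted f \<longrightarrow>
           (\<exists>\<Delta> :: nat set set. simplicial_complex \<Delta> \<and> is_f_polynomial f \<Delta>)"
proof (intro allI impI)
  fix f :: "nat poly" assume pf: "pos_real_rooted f"
  define d where "d = degree f"
  have c0: "coeff f 0 = 1" and cpos: "\<And>k. 1 \<le> k \<Longrightarrow> k \<le> d \<Longrightarrow> coeff f k > 0"
    using pf by (auto simp: pos_real_rooted_def d_def)
  have hyp: "\<And>i. 1 \<le> i \<Longrightarrow> i < d \<Longrightarrow> h_coef (Suc i) (coeff f (Suc i)) \<le> g_coef i (coeff f i)"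
    using assms pf d_def by auto
  define B where "B k = binexp k (coeff f k)" for k
  have Brep: "binexp_rep k (coeff f k) (B k)" if "1 \<le> k" "k \<le> d" for k
    using binexp_facts[of k "coeff f k"] cpos[OF that] that B_def by (simp add: Suc_le_eq)
  define Lay where "Lay k = Seg k (B k)" for k
  define \<Delta> where "\<Delta> = insert {} (\<Union>k\<in>{1..d}. Lay k)"
  have Lcard: "finite X \<and> card X = k" if "1 \<le> k" "k \<le> d" "X \<in> Lay k" for k X
    using Seg_card[OF binexp_rep_facts(1)[OF Brep[OF that(1,2)]]] that(3) Lay_def by blast
  have Lsize: "card (Lay k) = coeff f k" if "1 \<le> k" "k \<le> d" for k
  proof -
    note F = binexp_rep_facts[OF Brep[OF that]]
    show ?thesis using Seg_card_sum[OF F(1)] F(2) F(4) Lay_def by simp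
  qed
  have step: "F - {x} \<in> \<Delta>" if F: "F \<in> \<Delta>" for F x
  proof (cases "F = {} \<or> x \<notin> F")
    case True
    then show ?thesis using F by (auto simp: \<Delta>_def)
  next
    case False
    then obtain k where k: "1 \<le> k" "k \<le> d" "F \<in> Lay k" and x: "x \<in> F" using F by (auto simp: \<Delta>_def)
    have cF: "finite F" "card F = k" using Lcard[OF k] by auto
    show ?thesis
    proof (cases "k = 1")
      case True
      then obtain a where "F = {a}" using cF card_1_singletonE by metis
      then have "F - {x} = {}" using x by simp
      then show ?thesis by (simp add: \<Delta>_def)
    next
      case False
      then obtain i where i: "k = Suc i" "1 \<le> i" "i < d" using k by (cases k) auto
      have h: "h_coef (Suc i) (coeff f (Suc i)) \<le> g_coef i (coeff f i)" using hyp i by auto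
      have sub: "Seg i (B (Suc i)) \<subseteq> Seg i (B i)"
        using key[OF i(2) Brep[of "Suc i"] Brep[of i]] h i
        by (simp add: h_coef_def g_coef_def Let_def B_def)
      have "F - {x} \<in> Seg i (B (Suc i))"
        using shadow1[OF binexp_rep_facts(1)[OF Brep[of "Suc i"]]] k i x Lay_def by auto
      then have "F - {x} \<in> Lay i" using sub Lay_def by auto
      then show ?thesis using i by (auto simp: \<Delta>_def)
    qed
  qed
  have down: "finite D \<Longrightarrow> \<forall>F\<in>\<Delta>. F - D \<in> \<Delta>" for D
  proof (induction D rule: finite_induct)
    case empty thus ?case by simp
  next
    case (insert x D)
    have "F - insert x D = (F - D) - {x}" for F by auto
    then show ?case using insert step by auto
  qed
  have memD: "\<exists>k. 1 \<le> k \<and> k \<le> d \<and> F \<in> Lay k" if "F \<in> \<Delta>" "F \<noteq> {}" for F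
    using that by (auto simp: \<Delta>_def)
  have fin: "\<forall>F\<in>\<Delta>. finite F" using Lcard by (auto simp: \<Delta>_def)
  have sc: "simplicial_complex \<Delta>"
    unfolding simplicial_complex_def
  proof (intro conjI ballI allI impI)
    show "finite \<Delta>" by (simp add: \<Delta>_def Lay_def Seg_finite)
    show "{} \<in> \<Delta>" by (simp add: \<Delta>_def)
    show "finite F" if "F \<in> \<Delta>" for F using fin that by blast
    fix F G assume FG: "F \<in> \<Delta>" "G \<subseteq> F"
    have "G = F - (F - G)" using FG by auto
    moreover have "finite (F - G)" using fin FG by auto
    ultimately show "G \<in> \<Delta>" using down[of "F - G"] FG by auto
  qed
  have fp: "is_f_polynomial f \<Delta>"
    unfolding is_f_polynomial_def
  proof
    fix n
    show "card {F \<in> \<Delta>. card F = n} = coeff f n"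
    proof (cases "n = 0")
      case True
      have "{F \<in> \<Delta>. card F = n} = {{}}"
      proof
        show "{F \<in> \<Delta>. card F = n} \<subseteq> {{}}"
        proof
          fix F assume "F \<in> {F \<in> \<Delta>. card F = n}"
          then have F: "F \<in> \<Delta>" "card F = 0" using True by auto
          have "F = {}"
          proof (rule ccontr)
            assume "F \<noteq> {}"
            then obtain k where "1 \<le> k" "k \<le> d" "F \<in> Lay k" using memD F by blast
            then show False using Lcard F by fastforce
          qed
          then show "F \<in> {{}}" by simp
        qed
        show "{{}} \<subseteq> {F \<in> \<Delta>. card F = n}" using True by (simp add: \<Delta>_def)
      qed
      then show ?thesis using True c0 by simp
    next
      case False
      show ?thesis
      proof (cases "n \<le> d")
        case True
        have "{F \<in> \<Delta>. card F = n} = Lay n"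
        proof
          show "{F \<in> \<Delta>. card F = n} \<subseteq> Lay n"
          proof
            fix F assume "F \<in> {F \<in> \<Delta>. card F = n}"
            then have F: "F \<in> \<Delta>" "card F = n" by auto
            then have "F \<noteq> {}" using False by auto
            then obtain k where "1 \<le> k" "k \<le> d" "F \<in> Lay k" using memD F by blast
            moreover then have "k = n" using Lcard F by fastforce
            ultimately show "F \<in> Lay n" by simp
          qed
          show "Lay n \<subseteq> {F \<in> \<Delta>. card F = n}" using Lcard True False by (auto simp: \<Delta>_def)
        qed
        then show ?thesis using Lsize True False by simp
      next
        case False2: False
        have "{F \<in> \<Delta>. card F = n} = {}"
        proof (rule ccontr)
          assume "{F \<in> \<Delta>. card F = n} \<noteq> {}"
          then obtain F where F: "F \<in> \<Delta>" "card F = n" by auto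
          then have "F \<noteq> {}" using False by auto
          then obtain k where "1 \<le> k" "k \<le> d" "F \<in> Lay k" using memD F by blast
          then show False using Lcard F False2 by fastforce
        qed
        moreover have "coeff f n = 0" using False2 d_def by (intro coeff_eq_0) simp
        ultimately show ?thesis by (simp only: card.empty)
      qed
    qed
  qed
  show "\<exists>\<Delta> :: nat set set. simplicial_complex \<Delta> \<and> is_f_polynomial f \<Delta>" using sc fp by blast
qed

end
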